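(* Every SSSCG in which the leader's cost functions are weakly monotonic and the followers' cost functions are strictly monotonic has the following property: if it admits a PSE $(\sigma_\ell,\nu)$ with $\sigma_\ell$ mixed, then it also admits a PSE $(\hat\sigma_\ell,\hat\nu)$ with $\hat\sigma_\ell$ pure; in particular, it admits a PSE in which the leader's strategy is pure.
   Context: A symmetric Stackelberg singleton congestion game (SSSCG) consists of a leader $\ell$, a finite set $F$ of followers, a finite set $R$ of resources which every player may select (each player selects exactly one), and cost functions $c_{i,\ell},c_{i,f}:\mathbb N\to\mathbb Q$ ($i\in R$) for the leader and the followers with $c_{i,\ell}(0)=c_{i,f}(0)=0$. The leader commits to a probability distribution $\sigma_\ell$ on $R$ (pure if it puts probability $1$ on one resource). A followers' configuration is $\nu\in\mathbb N^R$ with $\sum_i\nu_i=|F|$. The followers' expected cost of resource $i$ with $x$ followers is $c^{\sigma_\ell}_{i,f}(x)=\sigma_\ell(i)c_{i,f}(x+1)+(1-\sigma_\ell(i))c_{i,f}(x)$; the leader's cost is $c_\ell^{(\sigma_\ell,\nu)}=\sum_{i\in R}\sigma_\ell(i)c_{i,\ell}(\nu_i+1)$. $\nu$ is a Nash equilibrium for $\sigma_\ell$ ($\nu\in E^{\sigma_\ell}$) if for all $i$ with $\nu_i>0$ and all $j\ne i$, $c^{\sigma_\ell}_{i,f}(\nu_i)\le c^{\sigma_\ell}_{j,f}(\nu_j+1)$. A pessimistic Stackelberg equilibrium (PSE) is a pair $(\sigma_\ell,\nu)$ such that $\sigma_\ell$ attains the minimum over all leader strategies of $\max_{\nu'\in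 E^{\sigma_\ell}}c_\ell^{(\sigma_\ell,\nu')}$ and $\nu\in E^{\sigma_\ell}$ attains that maximum. Weakly monotonic leader costs: $c_{i,\ell}(x)\le c_{i,\ell}(x+1)$ for all $i,x$; strictly monotonic follower costs: $c_{i,f}(x)<c_{i,f}(x+1)$ for all $i,x$. *)

theory Defs
  imports Complex_Main
begin

text \<open>A symmetric Stackelberg singleton congestion game (SSSCG) is given by a finite
 set of resources R, a finite set of followers F, and cost functions
 cl i, cf i :: nat \<Rightarrow> rat for every resource i (leader / followers) with value 0 at 0.
 Leader mixed strategies are probability distributions on R, given as functions
 'r \<Rightarrow> real vanishing outside R.\<close>

definition ssscg :: "'r set \<Rightarrow> 'f set \<Rightarrow> ('r \<Rightarrow> nat \<Rightarrow> rat) \<Rightarrow> ('r \<Rightarrow> nat \<Rightarrow> rat) \<Rightarrow> bool" where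
  "ssscg R F cl cf \<longleftrightarrow> finite R \<and> R \<noteq> {} \<and> finite F \<and>
     (\<forall>i\<in>R. cl i 0 = 0 \<and> cf i 0 = 0)"

definition leader_strategy :: "'r set \<Rightarrow> ('r \<Rightarrow> real) \<Rightarrow> bool" where
  "leader_strategy R \<sigma> \<longleftrightarrow> (\<forall>i. 0 \<le> \<sigma> i) \<and> (\<forall>i. i \<notin> R \<longrightarrow> \<sigma> i = 0) \<and> sum \<sigma> R = 1"

definition pure_strategy :: "'r set \<Rightarrow> ('r \<Rightarrow> real) \<Rightarrow> bool" where
  "pure_strategy R \<sigma> \<longleftrightarrow> leader_strategy R \<sigma> \<and> (\<exists>i\<in>R. \<sigma> i = 1)"

definition followers_config :: "'r set \<Rightarrow> 'f set \<Rightarrow> ('r \<Rightarrow> nat) \<Rightarrow> bool" where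
  "followers_config R F \<nu> \<longleftrightarrow> (\<forall>i. i \<notin> R \<longrightarrow> \<nu> i = 0) \<and> sum \<nu> R = card F"

text \<open>followers' expected cost of resource i used by x followers\<close>
definition fcost :: "('r \<Rightarrow> nat \<Rightarrow> rat) \<Rightarrow> ('r \<Rightarrow> real) \<Rightarrow> 'r \<Rightarrow> nat \<Rightarrow> real" where
  "fcost cf \<sigma> i x = \<sigma> i * of_rat (cf i (x + 1)) + (1 - \<sigma> i) * of_rat (cf i x)"

definition leader_cost :: "'r set \<Rightarrow> ('r \<Rightarrow> nat \<Rightarrow> rat) \<Rightarrow> ('r \<Rightarrow> real) \<Rightarrow> ('r \<Rightarrow> nat) \<Rightarrow> real" where
  "leader_cost R cl \<sigma> \<nu> = (\<Sum>i\<in>R. \<sigma> i * of_rat (cl i (\<nu> i + 1)))"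

definition follower_NE :: "'r set \<Rightarrow> 'f set \<Rightarrow> ('r \<Rightarrow> nat \<Rightarrow> rat) \<Rightarrow> ('r \<Rightarrow> real) \<Rightarrow> ('r \<Rightarrow> nat) \<Rightarrow> bool" where
  "follower_NE R F cf \<sigma> \<nu> \<longleftrightarrow> followers_config R F \<nu> \<and>
     (\<forall>i\<in>R. \<forall>j\<in>R. 0 < \<nu> i \<and> j \<noteq> i \<longrightarrow> fcost cf \<sigma> i (\<nu> i) \<le> fcost cf \<sigma> j (\<nu> j + 1))"

text \<open>Pessimistic Stackelberg equilibrium: \<nu> is a worst NE for \<sigma>, and the worst-case
 cost of \<sigma> is minimal, i.e. every other strategy has worst-case cost at least as large.\<close>
definition PSE :: "'r set \<Rightarrow> 'f set \<Rightarrow> ('r \<Rightarrow> nat \<Rightarrow> rat) \<Rightarrow> ('r \<Rightarrow> nat \<Rightarrow> rat) \<Rightarrow> ('r \<Rightarrow> real) \<Rightarrow> ('r \<Rightarrow> nat) \<Rightarrow> bool" where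
  "PSE R F cl cf \<sigma> \<nu> \<longleftrightarrow> leader_strategy R \<sigma> \<and> follower_NE R F cf \<sigma> \<nu> \<and>
     (\<forall>\<nu>'. follower_NE R F cf \<sigma> \<nu>' \<longrightarrow> leader_cost R cl \<sigma> \<nu>' \<le> leader_cost R cl \<sigma> \<nu>) \<and>
     (\<forall>\<sigma>'. leader_strategy R \<sigma>' \<longrightarrow>
        (\<exists>\<nu>'. follower_NE R F cf \<sigma>' \<nu>' \<and> leader_cost R cl \<sigma> \<nu> \<le> leader_cost R cl \<sigma>' \<nu>'))"

end

theory Submission
  imports Defs "HOL-Library.FuncSet"
begin

definition pu :: "'r \<Rightarrow> 'r \<Rightarrow> real" where
  "pu i = (\<lambda>k. if k = i then 1 else 0)"

lemma sum_two:
  fixes f :: "'a \<Rightarrow> 'b::comm_monoid_add"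
  assumes "finite R" "i \<in> R" "j \<in> R" "i \<noteq> j"
  shows "sum f R = f i + f j + sum f (R - {i, j})"
proof -
  have "sum f R = f i + sum f (R - {i})" using assms by (simp add: sum.remove)
  also have "sum f (R - {i}) = f j + sum f (R - {i} - {j})"
    using assms by (intro sum.remove) auto
  finally show ?thesis by (simp add: add.assoc Diff_insert2[symmetric] insert_commute)
qed

lemma configs_finite:
  assumes "finite R"
  shows "finite {\<nu>. followers_config R F \<nu>}"
proof -
  let ?e = "\<lambda>g::'a \<Rightarrow> nat. \<lambda>i. if i \<in> R then g i else 0"
  have "{\<nu>. followers_config R F \<nu>} \<subseteq> ?e ` (PiE R (\<lambda>_. {..card F}))"
  proof
    fix \<nu> assume "\<nu> \<in> {\<nu>. followers_config R F \<nu>}"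
    hence c: "\<forall>i. i \<notin> R \<longrightarrow> \<nu> i = 0" "sum \<nu> R = card F"
      by (auto simp: followers_config_def)
    have "restrict \<nu> R \<in> PiE R (\<lambda>_. {..card F})"
      using c assms by (auto simp: PiE_def extensional_def Pi_def) (metis c(2) member_le_sum zero_le assms)
    moreover have "\<nu> = ?e (restrict \<nu> R)" using c by auto
    ultimately show "\<nu> \<in> ?e ` (PiE R (\<lambda>_. {..card F}))" by blast
  qed
  moreover have "finite (PiE R (\<lambda>_. {..card F}))" using assms by (intro finite_PiE) auto
  ultimately show ?thesis by (meson finite_imageI finite_subset)
qed

definition pot :: "'r set \<Rightarrow> ('r \<Rightarrow> nat \<Rightarrow> rat) \<Rightarrow> ('r \<Rightarrow> real) \<Rightarrow> ('r \<Rightarrow> nat) \<Rightarrow> real" where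
  "pot R cf \<sigma> \<nu> = (\<Sum>k\<in>R. \<Sum>x<\<nu> k. fcost cf \<sigma> k (Suc x))"

lemma NE_exists:
  assumes "finite R" "R \<noteq> {}"
  shows "\<exists>\<nu>. follower_NE R F cf \<sigma> \<nu>"
proof -
  let ?S = "{\<nu>. followers_config R F \<nu>}"
  have fin: "finite ?S" using configs_finite assms by blast
  obtain r0 where r0: "r0 \<in> R" using assms by blast
  have "followers_config R F (\<lambda>i. if i = r0 then card F else 0)"
    using r0 assms by (simp add: followers_config_def)
  hence ne: "?S \<noteq> {}" by blast
  obtain \<nu> where \<nu>S: "\<nu> \<in> ?S" and \<nu>min: "\<forall>\<nu>'\<in>?S. pot R cf \<sigma> \<nu> \<le> pot R cf \<sigma> \<nu>'"
    using ex_min_if_finite[OF fin ne] 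
    by (metis (no_types, lifting) arg_min_if_finite(1) arg_min_least fin ne not_le)
  have "follower_NE R F cf \<sigma> \<nu>"
    unfolding follower_NE_def
  proof (intro conjI ballI impI)
    show "followers_config R F \<nu>" using \<nu>S by simp
    fix i j assume ij: "i \<in> R" "j \<in> R" "0 < \<nu> i \<and> j \<noteq> i"
    show "fcost cf \<sigma> i (\<nu> i) \<le> fcost cf \<sigma> j (\<nu> j + 1)"
    proof (rule ccontr)
      assume bad: "\<not> ?thesis"
      have ijne: "i \<noteq> j" using ij by auto
      obtain m where m: "\<nu> i = Suc m" using ij by (cases "\<nu> i") auto
      define \<nu>' where "\<nu>' = \<nu>(i := m, j := Suc (\<nu> j))"
      have cfg: "followers_config R F \<nu>'"
      proof -
        have "sum \<nu>' R = \<nu>' i + \<nu>' j + sum \<nu>' (R - {i,j})"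
          using assms(1) ij ijne by (simp add: sum_two[of R i j])
        also have "sum \<nu>' (R - {i,j}) = sum \<nu> (R - {i,j})"
          by (rule sum.cong) (auto simp: \<nu>'_def)
        also have "\<nu>' i + \<nu>' j + sum \<nu> (R - {i,j}) = \<nu> i + \<nu> j + sum \<nu> (R - {i,j})"
          using ij m by (auto simp: \<nu>'_def)
        also have "\<dots> = sum \<nu> R" using assms(1) ij ijne by (simp add: sum_two[of R i j])
        finally show ?thesis using \<nu>S ij by (auto simp: followers_config_def \<nu>'_def)
      qed
      let ?h = "\<lambda>\<mu> k. \<Sum>x<\<mu> k. fcost cf \<sigma> k (Suc x)"
      have "pot R cf \<sigma> \<nu>' = ?h \<nu>' i + ?h \<nu>' j + sum (?h \<nu>') (R - {i,j})"
        unfolding pot_def using assms(1) ij ijne by (simp add: sum_two[of R i j])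
      also have "sum (?h \<nu>') (R - {i,j}) = sum (?h \<nu>) (R - {i,j})"
        by (rule sum.cong) (auto simp: \<nu>'_def)
      also have "?h \<nu>' i = ?h \<nu> i - fcost cf \<sigma> i (\<nu> i)"
        using ij m by (simp add: \<nu>'_def)
      also have "?h \<nu>' j = ?h \<nu> j + fcost cf \<sigma> j (\<nu> j + 1)"
        using ij m by (simp add: \<nu>'_def)
      finally have "pot R cf \<sigma> \<nu>' = pot R cf \<sigma> \<nu> - fcost cf \<sigma> i (\<nu> i) + fcost cf \<sigma> j (\<nu> j + 1)"
        unfolding pot_def using assms(1) ij ijne by (simp add: sum_two[of R i j])
      hence "pot R cf \<sigma> \<nu>' < pot R cf \<sigma> \<nu>" using bad by simp
      thus False using \<nu>min cfg by force
    qed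
  qed
  thus ?thesis by blast
qed


lemma cmono:
  fixes cf :: "'r \<Rightarrow> nat \<Rightarrow> rat"
  assumes "\<forall>x. cf k x < cf k (x + 1)" "a \<le> b"
  shows "real_of_rat (cf k a) \<le> real_of_rat (cf k b)"
proof -
  have "\<forall>x. real_of_rat (cf k x) \<le> real_of_rat (cf k (Suc x))"
    using assms(1) by (simp add: of_rat_less_eq less_imp_le)
  thus ?thesis using lift_Suc_mono_le[of "\<lambda>x. real_of_rat (cf k x)"] assms(2) by blast
qed

lemma key:
  assumes fin: "finite R" and mono: "\<forall>i\<in>R. \<forall>x. cf i x < cf i (x + 1)"
    and \<sigma>: "leader_strategy R \<sigma>" "\<sigma> i < 1" and i: "i \<in> R"
    and NE\<nu>: "follower_NE R F cf \<sigma> \<nu>" and NE\<mu>: "follower_NE R F cf (pu i) \<mu>"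
  shows "\<mu> i \<le> \<nu> i"
proof (rule ccontr)
  assume "\<not> \<mu> i \<le> \<nu> i" hence lt: "\<nu> i < \<mu> i" by simp
  have sums: "sum \<nu> R = card F" "sum \<mu> R = card F"
    using NE\<nu> NE\<mu> by (auto simp: follower_NE_def followers_config_def)
  have "\<exists>j\<in>R-{i}. \<mu> j < \<nu> j"
  proof (rule ccontr)
    assume "\<not> ?thesis" hence le: "\<forall>j\<in>R-{i}. \<nu> j \<le> \<mu> j" using not_less by blast
    have "sum \<nu> R = \<nu> i + sum \<nu> (R-{i})" using fin i by (simp add: sum.remove)
    also have "\<dots> < \<mu> i + sum \<mu> (R-{i})"
      using lt sum_mono[of "R-{i}" \<nu> \<mu>] le by (simp add: add_less_le_mono)
    also have "\<dots> = sum \<mu> R" using fin i by (simp add: sum.remove)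
    finally show False using sums by simp
  qed
  then obtain j where j: "j \<in> R" "j \<noteq> i" "\<mu> j < \<nu> j" by auto
  let ?c = "\<lambda>k x. real_of_rat (cf k x)"
  have h1: "?c i (\<mu> i + 1) \<le> ?c j (\<mu> j + 1)"
    using NE\<mu> i j lt unfolding follower_NE_def by (force simp: fcost_def pu_def)
  have h2: "fcost cf \<sigma> j (\<nu> j) \<le> fcost cf \<sigma> i (\<nu> i + 1)"
    using NE\<nu> i j unfolding follower_NE_def by force
  have sj: "0 \<le> \<sigma> j" using \<sigma> by (simp add: leader_strategy_def)
  have "?c j (\<nu> j) \<le> ?c j (\<nu> j + 1)" using mono j by (simp add: of_rat_less_eq less_imp_le)
  hence "0 \<le> \<sigma> j * (?c j (\<nu> j + 1) - ?c j (\<nu> j))" using sj by simp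
  hence h3: "?c j (\<nu> j) \<le> fcost cf \<sigma> j (\<nu> j)" by (simp add: fcost_def algebra_simps)
  have "?c i (\<nu> i + 1) < ?c i (\<nu> i + 1 + 1)" using mono i by (simp add: of_rat_less)
  hence "0 < (1 - \<sigma> i) * (?c i (\<nu> i + 1 + 1) - ?c i (\<nu> i + 1))" using \<sigma>(2) by simp
  hence h4: "fcost cf \<sigma> i (\<nu> i + 1) < ?c i (\<nu> i + 1 + 1)" by (simp add: fcost_def algebra_simps)
  have h5: "?c j (\<mu> j + 1) \<le> ?c j (\<nu> j)" using cmono[of cf j] mono j by simp
  have h6: "?c i (\<nu> i + 1 + 1) \<le> ?c i (\<mu> i + 1)" using cmono[of cf i] mono i lt by simp
  show False using h1 h2 h3 h4 h5 h6 by linarith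
qed


lemma fin_min:
  fixes f :: "'a \<Rightarrow> real"
  assumes "finite S" "S \<noteq> {}"
  shows "\<exists>x\<in>S. \<forall>y\<in>S. f x \<le> f y"
proof -
  have "Min (f ` S) \<in> f ` S" using assms by simp
  then obtain x where x: "x \<in> S" "f x = Min (f ` S)" by (metis imageE)
  have "\<forall>y\<in>S. Min (f ` S) \<le> f y" using assms by simp
  thus ?thesis using x by metis
qed

lemma fin_max:
  fixes f :: "'a \<Rightarrow> real"
  assumes "finite S" "S \<noteq> {}"
  shows "\<exists>x\<in>S. \<forall>y\<in>S. f y \<le> f x"
proof -
  have "Max (f ` S) \<in> f ` S" using assms by simp
  then obtain x where x: "x \<in> S" "f x = Max (f ` S)" by (metis imageE)
  have "\<forall>y\<in>S. f y \<le> Max (f ` S)" using assms by simp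
  thus ?thesis using x by metis
qed

lemma lc_pu:
  assumes "finite R" "i \<in> R"
  shows "leader_cost R cl (pu i) \<mu> = real_of_rat (cl i (\<mu> i + 1))"
proof -
  have "leader_cost R cl (pu i) \<mu> = (\<Sum>k\<in>R. if k = i then real_of_rat (cl k (\<mu> k + 1)) else 0)"
    unfolding leader_cost_def by (rule sum.cong) (auto simp: pu_def)
  thus ?thesis using assms by (simp add: sum.delta)
qed

lemma pu_strategy:
  assumes "finite R" "i \<in> R"
  shows "leader_strategy R (pu i)" "pure_strategy R (pu i)"
  using assms by (auto simp: leader_strategy_def pure_strategy_def pu_def sum.delta)

lemma pure_eq:
  assumes "finite R" "leader_strategy R \<sigma>" "k \<in> R" "\<sigma> k = 1"
  shows "\<sigma> = pu k"
proof
  fix x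
  have nn: "\<forall>i. 0 \<le> \<sigma> i" "\<forall>i. i \<notin> R \<longrightarrow> \<sigma> i = 0" "sum \<sigma> R = 1"
    using assms(2) by (auto simp: leader_strategy_def)
  have "sum \<sigma> R = \<sigma> k + sum \<sigma> (R - {k})" using assms by (simp add: sum.remove)
  hence z: "sum \<sigma> (R - {k}) = 0" using nn assms by simp
  have "\<forall>i\<in>R - {k}. \<sigma> i = 0"
    using sum_nonneg_eq_0_iff[of "R - {k}" \<sigma>] z nn assms(1) by auto
  thus "\<sigma> x = pu k x" using nn assms by (cases "x \<in> R") (auto simp: pu_def)
qed

lemma sigma_le1:
  assumes "finite R" "leader_strategy R \<sigma>"
  shows "\<sigma> k \<le> 1"
proof (cases "k \<in> R")
  case True
  thus ?thesis using member_le_sum[of k R \<sigma>] assms by (auto simp: leader_strategy_def)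
next
  case False thus ?thesis using assms by (auto simp: leader_strategy_def)
qed

theorem theorem8:
  fixes R :: "'r set" and F :: "'f set" and cl cf :: "'r \<Rightarrow> nat \<Rightarrow> rat"
  assumes "ssscg R F cl cf"
    and "\<forall>i\<in>R. \<forall>x. cl i x \<le> cl i (x + 1)"
    and "\<forall>i\<in>R. \<forall>x. cf i x < cf i (x + 1)"
  shows "((\<exists>\<sigma> \<nu>. PSE R F cl cf \<sigma> \<nu> \<and> \<not> pure_strategy R \<sigma>) \<longrightarrow>
            (\<exists>\<sigma> \<nu>. PSE R F cl cf \<sigma> \<nu> \<and> pure_strategy R \<sigma>))
         \<and> (\<exists>\<sigma> \<nu>. PSE R F cl cf \<sigma> \<nu> \<and> pure_strategy R \<sigma>)"
proof -
  have fin: "finite R" and ne: "R \<noteq> {}" using assms(1) by (auto simp: ssscg_def)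
  define NEs where "NEs i = {\<mu>. follower_NE R F cf (pu i) \<mu>}" for i
  have finNE: "finite (NEs i)" for i
    by (rule finite_subset[OF _ configs_finite[OF fin, of F]]) (auto simp: NEs_def follower_NE_def)
  have neNE: "NEs i \<noteq> {}" for i using NE_exists[OF fin ne] by (auto simp: NEs_def)
  define W where "W i = Max ((\<lambda>\<mu>. leader_cost R cl (pu i) \<mu>) ` NEs i)" for i
  have Wge: "leader_cost R cl (pu i) \<mu> \<le> W i" if "\<mu> \<in> NEs i" for i \<mu>
    unfolding W_def using finNE that by auto
  have Win: "\<exists>\<mu>\<in>NEs i. W i = leader_cost R cl (pu i) \<mu>" for i
  proof -
    have "W i \<in> (\<lambda>\<mu>. leader_cost R cl (pu i) \<mu>) ` NEs i" unfolding W_def using finNE neNE by simp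
    thus ?thesis by (metis imageE)
  qed
  obtain i0 where i0: "i0 \<in> R" "\<forall>k\<in>R. W i0 \<le> W k" using fin_min[OF fin ne, of W] by blast
  obtain \<mu>0 where \<mu>0: "\<mu>0 \<in> NEs i0" "W i0 = leader_cost R cl (pu i0) \<mu>0" using Win by blast
  have "PSE R F cl cf (pu i0) \<mu>0"
    unfolding PSE_def
  proof (intro conjI allI impI)
    show "leader_strategy R (pu i0)" by (rule pu_strategy(1)[OF fin i0(1)])
    show "follower_NE R F cf (pu i0) \<mu>0" using \<mu>0 by (simp add: NEs_def)
    fix \<nu>' assume "follower_NE R F cf (pu i0) \<nu>'"
    hence "\<nu>' \<in> NEs i0" unfolding NEs_def by blast
    hence "leader_cost R cl (pu i0) \<nu>' \<le> W i0" by (rule Wge)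
    thus "leader_cost R cl (pu i0) \<nu>' \<le> leader_cost R cl (pu i0) \<mu>0"
      using \<mu>0(2) by linarith
  next
    fix \<sigma>' assume \<sigma>': "leader_strategy R \<sigma>'"
    show "\<exists>\<nu>'. follower_NE R F cf \<sigma>' \<nu>' \<and> leader_cost R cl (pu i0) \<mu>0 \<le> leader_cost R cl \<sigma>' \<nu>'"
    proof (cases "\<exists>k\<in>R. \<sigma>' k = 1")
      case True
      then obtain k where k: "k \<in> R" "\<sigma>' k = 1" by blast
      have eq: "\<sigma>' = pu k" by (rule pure_eq[OF fin \<sigma>' k])
      obtain \<mu> where \<mu>: "\<mu> \<in> NEs k" "W k = leader_cost R cl (pu k) \<mu>" using Win by blast
      have W1: "W i0 \<le> W k" using i0(2) k(1) by blast
      have W2: "leader_cost R cl \<sigma>' \<mu> = W k" using \<mu>(2) eq by simp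
      show ?thesis
      proof (intro exI[of _ \<mu>] conjI)
        show "follower_NE R F cf \<sigma>' \<mu>" using \<mu>(1) eq unfolding NEs_def by simp
        show "leader_cost R cl (pu i0) \<mu>0 \<le> leader_cost R cl \<sigma>' \<mu>"
          using W1 W2 \<mu>0(2) by linarith
      qed
    next
      case False
      hence lt1: "\<forall>k\<in>R. \<sigma>' k < 1" using sigma_le1[OF fin \<sigma>'] by (metis order_le_less)
      obtain \<nu> where \<nu>: "follower_NE R F cf \<sigma>' \<nu>" using NE_exists[OF fin ne] by blast
      have bnd: "W i0 \<le> real_of_rat (cl k (\<nu> k + 1))" if k: "k \<in> R" for k
      proof -
        obtain \<mu> where \<mu>: "\<mu> \<in> NEs k" "W k = leader_cost R cl (pu k) \<mu>" using Win by blast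
        have "\<mu> k \<le> \<nu> k" using key[OF fin assms(3) \<sigma>' _ k \<nu>] lt1 k \<mu>(1) by (auto simp: NEs_def)
        have cm: "\<forall>x. real_of_rat (cl k x) \<le> real_of_rat (cl k (Suc x))"
          using assms(2) k by (simp add: of_rat_less_eq)
        have "real_of_rat (cl k (\<mu> k + 1)) \<le> real_of_rat (cl k (\<nu> k + 1))"
          using lift_Suc_mono_le[of "\<lambda>x. real_of_rat (cl k x)", OF _ \<open>\<mu> k \<le> \<nu> k\<close>[THEN Suc_le_mono[THEN iffD2]]] cm
          by simp
        moreover have "W i0 \<le> W k" using i0 k by blast
        moreover have "W k = real_of_rat (cl k (\<mu> k + 1))" using \<mu>(2) lc_pu[OF fin k] by simp
        ultimately show ?thesis by linarith
      qed
      have "leader_cost R cl (pu i0) \<mu>0 = (\<Sum>k\<in>R. \<sigma>' k * W i0)"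
      proof -
        have "(\<Sum>k\<in>R. \<sigma>' k * W i0) = sum \<sigma>' R * W i0" by (simp add: sum_distrib_right)
        thus ?thesis using \<sigma>' \<mu>0 by (simp add: leader_strategy_def)
      qed
      also have "\<dots> \<le> leader_cost R cl \<sigma>' \<nu>"
        unfolding leader_cost_def
        by (rule sum_mono, rule mult_left_mono) (use bnd \<sigma>' in \<open>auto simp: leader_strategy_def\<close>)
      finally show ?thesis using \<nu> by blast
    qed
  qed
  moreover have "pure_strategy R (pu i0)" by (rule pu_strategy(2)[OF fin i0(1)])
  ultimately show ?thesis by blast
qed

end
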